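(* Let $f(z)=\sum_{k\ge0}\hat f(k)z^k$ be holomorphic on the unit disk with $\sum_{k\ge0}|\hat f(k)|<\infty$ and $f(0)\ne0$, and let $(\gamma_n)_{n\ge0}$ be an increasing sequence in $(0,\infty)$. Let $A=(a_{nk})_{n,k\ge0}$ be the lower-triangular matrix with $a_{nk}:=\gamma_n^{-1}\widehat{(1/f)}(n-k)$ for $0\le k\le n$ and $a_{nk}=0$ for $k>n$, where $\widehat{(1/f)}(m)$ denotes the $m$-th Taylor coefficient of $1/f$ at $0$. Then $A$ has a left inverse $B=(b_{jn})_{j,n\ge0}$ (i.e. $\sum_n|b_{jn}|<\infty$ for each $j$ and $\sum_n b_{jn}a_{nk}=\delta_{jk}$ for all $j,k$) which is lower-triangular and satisfies \[ \sum_{n\ge0}|b_{jn}|\asymp\gamma_j\quad(j\to\infty). \]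
   Context: $\asymp$ means each side is bounded by a constant multiple of the other, with constants independent of $j$. *)

theory Defs
  imports "HOL-Complex_Analysis.Complex_Analysis"
begin

definition taylor_coeff0 :: "(complex \<Rightarrow> complex) \<Rightarrow> nat \<Rightarrow> complex" where
  "taylor_coeff0 g m = (deriv ^^ m) g 0 / of_nat (fact m)"

end

theory Submission
  imports Defs
begin

theorem theorem3p3:
  fixes f :: "complex \<Rightarrow> complex" and fhat :: "nat \<Rightarrow> complex"
    and \<gamma> :: "nat \<Rightarrow> real" and A :: "nat \<Rightarrow> nat \<Rightarrow> complex"
  assumes hol: "f holomorphic_on ball 0 1"
    and ser: "\<And>z. z \<in> ball 0 1 \<Longrightarrow> (\<lambda>k. fhat k * z ^ k) sums f z"
    and abs_sum: "summable (\<lambda>k. norm (fhat k))"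
    and f0: "f 0 \<noteq> 0"
    and gpos: "\<And>n. \<gamma> n > 0"
    and gmono: "mono \<gamma>"
    and A_def: "\<And>n k. A n k = (if k \<le> n then taylor_coeff0 (\<lambda>z. 1 / f z) (n - k) / complex_of_real (\<gamma> n) else 0)"
  shows "\<exists>B :: nat \<Rightarrow> nat \<Rightarrow> complex.
           (\<forall>j n. j < n \<longrightarrow> B j n = 0)
         \<and> (\<forall>j. summable (\<lambda>n. norm (B j n)))
         \<and> (\<forall>j k. (\<Sum>n. B j n * A n k) = (if j = k then 1 else 0))
         \<and> (\<exists>c1>0. \<exists>c2>0. \<forall>\<^sub>F j in sequentially.
               c1 * \<gamma> j \<le> (\<Sum>n. norm (B j n)) \<and> (\<Sum>n. norm (B j n)) \<le> c2 * \<gamma> j)"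
proof -
  define F where "F = Abs_fps fhat"
  have "eventually (\<lambda>u. u \<in> ball (0::complex) 1) (nhds 0)"
    by (intro eventually_nhds_in_open) auto
  hence "eventually (\<lambda>u. (\<lambda>n. fps_nth F n * u ^ n) sums f u) (nhds 0)"
    by eventually_elim (use ser in \<open>auto simp: F_def\<close>)
  hence fexp: "f has_fps_expansion F" by (rule has_fps_expansionI)
  have F0: "fps_nth F 0 = f 0" using fps_nth_fps_expansion[OF fexp, of 0] by simp
  hence fh0: "fhat 0 \<noteq> 0" using f0 by (simp add: F_def)
  have iexp: "(\<lambda>x. inverse (f x)) has_fps_expansion inverse F"
    using has_fps_expansion_inverse[OF fexp] F0 f0 by simp
  define c where "c = fps_nth (inverse F)"
  have tc: "taylor_coeff0 (\<lambda>z. 1 / f z) m = c m" for m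
    using fps_nth_fps_expansion[OF iexp, of m]
    by (simp add: taylor_coeff0_def c_def inverse_eq_divide)
  have conv: "(\<Sum>i=0..m. c i * fhat (m - i)) = (if m = 0 then 1 else 0)" for m
  proof -
    have "inverse F * F = 1" using F0 f0 by (simp add: inverse_mult_eq_1)
    hence "fps_nth (inverse F * F) m = (if m = 0 then 1 else 0)" by simp
    thus ?thesis by (simp add: fps_mult_nth c_def F_def)
  qed
  define B where "B j n = (if n \<le> j then fhat (j - n) * complex_of_real (\<gamma> n) else 0)" for j n
  have P1: "\<forall>j n. j < n \<longrightarrow> B j n = 0" by (auto simp: B_def)
  have P2: "\<forall>j. summable (\<lambda>n. norm (B j n))"
  proof
    fix j show "summable (\<lambda>n. norm (B j n))"
      by (rule summable_finite[of "{..j}"]) (auto simp: B_def)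
  qed
  have P3: "\<forall>j k. (\<Sum>n. B j n * A n k) = (if j = k then 1 else 0)"
  proof (intro allI)
    fix j k
    have "(\<Sum>n. B j n * A n k) = (\<Sum>n\<in>{k..j}. B j n * A n k)"
      by (rule suminf_finite) (auto simp: B_def A_def)
    also have "\<dots> = (\<Sum>n\<in>{k..j}. fhat (j - n) * c (n - k))"
    proof (rule sum.cong)
      fix n assume "n \<in> {k..j}"
      moreover have "complex_of_real (\<gamma> n) \<noteq> 0" using gpos[of n] by simp
      ultimately show "B j n * A n k = fhat (j - n) * c (n - k)"
        by (simp add: B_def A_def tc)
    qed simp
    also have "\<dots> = (if j = k then 1 else 0)"
    proof (cases "k \<le> j")
      case False thus ?thesis by simp
    next
      case True
      have "(\<Sum>n\<in>{k..j}. fhat (j - n) * c (n - k)) = (\<Sum>n\<in>{0+k..(j-k)+k}. fhat (j - n) * c (n - k))"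
        using True by simp
      also have "\<dots> = (\<Sum>i=0..j-k. fhat (j - (i + k)) * c i)"
        by (subst sum.shift_bounds_cl_nat_ivl) simp
      also have "\<dots> = (\<Sum>i=0..j-k. c i * fhat ((j - k) - i))"
        by (rule sum.cong) (auto simp: mult.commute add.commute)
      also have "\<dots> = (if j = k then 1 else 0)" using conv[of "j-k"] True by simp
      finally show ?thesis .
    qed
    finally show "(\<Sum>n. B j n * A n k) = (if j = k then 1 else 0)" .
  qed
  define S where "S = (\<Sum>k. norm (fhat k))"
  have nsum: "(\<Sum>n. norm (B j n)) = (\<Sum>n\<le>j. norm (fhat (j - n)) * \<gamma> n)" for j
  proof -
    have "(\<Sum>n. norm (B j n)) = (\<Sum>n\<le>j. norm (B j n))"
      by (rule suminf_finite) (auto simp: B_def)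
    also have "\<dots> = (\<Sum>n\<le>j. norm (fhat (j - n)) * \<gamma> n)"
      by (rule sum.cong) (auto simp: B_def norm_mult less_imp_le[OF gpos])
    finally show ?thesis .
  qed
  have lower: "norm (fhat 0) * \<gamma> j \<le> (\<Sum>n. norm (B j n))" for j
  proof -
    have "norm (fhat 0) * \<gamma> j = (\<Sum>n\<in>{j}. norm (fhat (j - n)) * \<gamma> n)" by simp
    also have "\<dots> \<le> (\<Sum>n\<le>j. norm (fhat (j - n)) * \<gamma> n)"
      by (rule sum_mono2) (auto intro: mult_nonneg_nonneg less_imp_le[OF gpos])
    finally show ?thesis using nsum by simp
  qed
  have upper: "(\<Sum>n. norm (B j n)) \<le> (S + 1) * \<gamma> j" for j
  proof -
    have "(\<Sum>n\<le>j. norm (fhat (j - n)) * \<gamma> n) \<le> (\<Sum>n\<le>j. norm (fhat (j - n)) * \<gamma> j)"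
      by (rule sum_mono) (auto intro: mult_left_mono monoD[OF gmono])
    also have "\<dots> = (\<Sum>n\<le>j. norm (fhat (j - n))) * \<gamma> j" by (simp add: sum_distrib_right)
    also have "(\<Sum>n\<le>j. norm (fhat (j - n))) = (\<Sum>n\<le>j. norm (fhat n))"
      using sum.atLeastAtMost_rev[of "\<lambda>n. norm (fhat n)" 0 j] by (simp add: atLeast0AtMost)
    also have "(\<Sum>n\<le>j. norm (fhat n)) \<le> S"
      unfolding S_def by (rule sum_le_suminf[OF abs_sum]) auto
    hence "(\<Sum>n\<le>j. norm (fhat n)) * \<gamma> j \<le> (S + 1) * \<gamma> j"
      using gpos[of j] by (intro mult_right_mono) auto
    finally show ?thesis using nsum by simp
  qed
  have Spos: "S \<ge> 0" unfolding S_def by (rule suminf_nonneg[OF abs_sum]) auto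
  show ?thesis
    apply (rule exI[of _ B])
    apply (intro conjI P1 P2 P3)
    apply (rule exI[of _ "norm (fhat 0)"])
    using fh0 Spos lower upper by (auto intro!: exI[of _ "S + 1"])
qed

end
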